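(* For every constant $C_1 > 1$ there exists a constant $C_2 > 1$ such that the following holds. Let $\psi:\mathbb{R}\to\mathbb{R}$ satisfy $-\log(1 - x + \frac{x^2}{2}) \le \psi(x) \le \log(1 + x + \frac{x^2}{2})$ for all $x \in \mathbb{R}$. Let $\delta\in(0,1)$, suppose $n > C_2\log\frac{1}{\delta}$, and let $T = \sigma\sqrt{\frac{n}{2\log\frac{2}{\delta}}}$. Let $x_1,\dots,x_n$ be i.i.d. real samples with mean $\mu$ and variance at most $\sigma^2$, and let $\mu_0\in\mathbb{R}$ be a given initial estimate with $|\mu_0 - \mu| \le C_1\sigma\sqrt{\frac{\log\frac{1}{\delta}}{n}}$. Define \[ \widehat{\mu} = \mu_0 + \frac{T}{n}\sum_{i=1}^n \psi\!\left(\frac{x_i - \mu_0}{T}\right). \] Then with probability at least $1-\delta$, \[ |\widehat{\mu} - \mu| \le \left(1 + C_2\frac{\log\frac{1}{\delta}}{n}\right)\cdot\sigma\cdot\sqrt{\frac{2\log\frac{2}{\delta}}{n}}. \] *)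

theory Defs
  imports "HOL-Probability.Probability"
begin

end

theory Submission
  imports Defs
begin

lemma chernoff_prod:
  fixes P :: "real measure" and f :: "real \<Rightarrow> real"
  assumes P: "prob_space P" and fin: "finite I" and fi: "integrable P f"
    and fpos: "\<And>x. f x \<ge> 0" and c: "c > 0"
  shows "measure (PiM I (\<lambda>_. P)) {\<omega> \<in> space (PiM I (\<lambda>_. P)). (\<Prod>i\<in>I. f (\<omega> i)) \<ge> c}
      \<le> (\<integral>x. f x \<partial>P) ^ card I / c"
proof -
  interpret product_prob_space "\<lambda>_. P" I
    by (simp add: P product_prob_space.intro product_prob_space_axioms.intro product_sigma_finite.intro prob_space_imp_sigma_finite)
  have int: "integrable (PiM I (\<lambda>_. P)) (\<lambda>\<omega>. \<Prod>i\<in>I. f (\<omega> i))"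
    by (rule product_integrable_prod[OF fin]) (use fi in auto)
  have "measure (PiM I (\<lambda>_. P)) {\<omega> \<in> space (PiM I (\<lambda>_. P)). (\<Prod>i\<in>I. f (\<omega> i)) \<ge> c}
      \<le> (\<integral>\<omega>. (\<Prod>i\<in>I. f (\<omega> i)) \<partial>PiM I (\<lambda>_. P)) / c"
    by (rule integral_Markov_inequality_measure[OF int, where A="space (PiM I (\<lambda>_. P))"])
       (auto simp: fpos prod_nonneg c)
  also have "(\<integral>\<omega>. (\<Prod>i\<in>I. f (\<omega> i)) \<partial>PiM I (\<lambda>_. P)) = (\<Prod>i\<in>I. \<integral>x. f x \<partial>P)"
    by (rule product_integral_prod[OF fin]) (use fi in auto)
  finally show ?thesis by simp
qed

lemma one_side:
  fixes P :: "real measure" and a \<mu>0 \<delta> :: real and n :: nat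
  assumes P: "prob_space P" and sP: "sets P = sets borel"
    and i1: "integrable P (\<lambda>x. x)" and i2: "integrable P (\<lambda>x. x^2)"
    and d0: "0 < \<delta>"
  defines "M \<equiv> PiM {..<n} (\<lambda>_. P)"
  shows "\<exists>B \<in> sets M. measure M B \<le> \<delta>/2 \<and> (\<forall>\<omega>\<in>space M - B.
     (\<Sum>i<n. ln (1 + a*(\<omega> i - \<mu>0) + (a*(\<omega> i - \<mu>0))^2/2))
       \<le> real n * (a * ((\<integral>y. y \<partial>P) - \<mu>0) + a^2 * ((\<integral>x. (x - (\<integral>y. y \<partial>P))^2 \<partial>P) + ((\<integral>y. y \<partial>P) - \<mu>0)^2) / 2) + ln (2/\<delta>))"
proof -
  define \<mu> where "\<mu> = (\<integral>y. y \<partial>P)"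
  define V where "V = (\<integral>x. (x - \<mu>)^2 \<partial>P)"
  define g where "g = (\<lambda>x. 1 + a*(x - \<mu>0) + (a*(x - \<mu>0))^2/2)"
  define c0 c1 c2 where "c0 = 1 - a*\<mu>0 + a^2*\<mu>0^2/2" and "c1 = a - a^2*\<mu>0" and "c2 = a^2/2"
  have geq: "g = (\<lambda>x. c0 + c1*x + c2*x^2)"
    unfolding g_def c0_def c1_def c2_def by (rule ext) (simp add: power2_eq_square field_simps)
  have gpos: "g x > 0" for x
  proof -
    have "g x = ((1 + a*(x-\<mu>0))^2 + 1)/2" unfolding g_def by (simp add: power2_eq_square field_simps)
    also have "\<dots> > 0" by (simp add: add_nonneg_pos)
    finally show ?thesis .
  qed
  interpret prob_space P by (rule P)
  have gi: "integrable P g" unfolding geq using i1 i2 by auto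
  have Eg: "(\<integral>x. g x \<partial>P) = c0 + c1*\<mu> + c2*(\<integral>x. x^2 \<partial>P)"
    unfolding geq \<mu>_def using i1 i2 by (simp add: prob_space)
  have "V = (\<integral>x. x^2 - 2*\<mu>*x + \<mu>^2 \<partial>P)" unfolding V_def by (simp add: power2_eq_square algebra_simps)
  also have "\<dots> = (\<integral>x. x^2 \<partial>P) - \<mu>^2" using i1 i2 by (simp add: prob_space \<mu>_def power2_eq_square)
  finally have Veq: "V = (\<integral>x. x^2 \<partial>P) - \<mu>^2" .
  define E where "E = (\<integral>x. g x \<partial>P)"
  have Eval: "E = 1 + a*(\<mu> - \<mu>0) + a^2*(V + (\<mu>-\<mu>0)^2)/2"
    unfolding E_def Eg Veq c0_def c1_def c2_def by (simp add: power2_eq_square field_simps)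
  have V0: "V \<ge> 0" unfolding V_def by simp
  have "E = ((1 + a*(\<mu> - \<mu>0))^2 + 1 + a^2*V)/2" unfolding Eval by (simp add: power2_eq_square field_simps)
  also have "\<dots> > 0" using V0 by (intro divide_pos_pos add_nonneg_pos add_pos_nonneg) auto
  finally have Epos: "E > 0" .
  have gm: "g \<in> borel_measurable P"
    by (subst measurable_cong_sets[OF sP refl]) (simp add: g_def)
  define c where "c = E ^ n * (2/\<delta>)"
  have cpos: "c > 0" unfolding c_def using Epos d0 by simp
  define B where "B = {\<omega> \<in> space M. (\<Prod>i\<in>{..<n}. g (\<omega> i)) \<ge> c}"
  have Bm: "B \<in> sets M" unfolding B_def M_def using gm by measurable
  have "measure M B \<le> E ^ card {..<n} / c"
    unfolding B_def M_def E_def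
    by (rule chernoff_prod[OF P _ gi _ cpos]) (auto intro: less_imp_le gpos)
  also have "\<dots> = \<delta>/2" unfolding c_def using Epos d0 by (simp add: field_simps)
  finally have mB: "measure M B \<le> \<delta>/2" .
  have lnE: "ln E \<le> a*(\<mu> - \<mu>0) + a^2*(V + (\<mu>-\<mu>0)^2)/2"
    using ln_le_minus_one[OF Epos] Eval by simp
  have "(\<Sum>i<n. ln (g (\<omega> i))) \<le> real n * (a*(\<mu> - \<mu>0) + a^2*(V + (\<mu>-\<mu>0)^2)/2) + ln (2/\<delta>)"
    if w: "\<omega> \<in> space M - B" for \<omega>
  proof -
    have lt: "(\<Prod>i\<in>{..<n}. g (\<omega> i)) < c" using w unfolding B_def by auto
    have pp: "(\<Prod>i\<in>{..<n}. g (\<omega> i)) > 0" by (simp add: gpos prod_pos)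
    have "(\<Sum>i<n. ln (g (\<omega> i))) = ln (\<Prod>i\<in>{..<n}. g (\<omega> i))"
      using gpos by (subst ln_prod) (auto simp: less_imp_neq[symmetric])
    also have "\<dots> < ln c" using lt pp by simp
    also have "ln c = real n * ln E + ln (2/\<delta>)" unfolding c_def using Epos d0
      by (subst ln_mult) (auto simp: ln_realpow)
    also have "\<dots> \<le> real n * (a*(\<mu> - \<mu>0) + a^2*(V + (\<mu>-\<mu>0)^2)/2) + ln (2/\<delta>)"
      using lnE by (simp add: mult_left_mono)
    finally show ?thesis by simp
  qed
  then show ?thesis using Bm mB unfolding g_def V_def \<mu>_def by blast
qed

lemma sum_step:
  fixes S T n l d W \<mu> \<mu>0 :: real
  assumes T: "T > 0" and n: "n > 0" and d: "d = \<mu> - \<mu>0"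
    and up: "S \<le> n * ((1/T) * d + (1/T)^2 * W / 2) + l"
    and lo: "- S \<le> n * ((-(1/T)) * d + (-(1/T))^2 * W / 2) + l"
  shows "\<bar>\<mu>0 + T / n * S - \<mu>\<bar> \<le> W / (2*T) + T * l / n"
proof -
  have "T/n * S \<le> T/n * (n * ((1/T) * d + (1/T)^2 * W / 2) + l)"
    using up T n by (intro mult_left_mono) auto
  also have "\<dots> = d + W/(2*T) + T*l/n" using T n by (simp add: field_simps power2_eq_square)
  finally have 1: "T/n * S \<le> d + W/(2*T) + T*l/n" .
  have "T/n * (-S) \<le> T/n * (n * ((-(1/T)) * d + (-(1/T))^2 * W / 2) + l)"
    using lo T n by (intro mult_left_mono) auto
  also have "\<dots> = -d + W/(2*T) + T*l/n" using T n by (simp add: field_simps power2_eq_square)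
  finally have 2: "T/n * (-S) \<le> -d + W/(2*T) + T*l/n" .
  show ?thesis using 1 2 d by (simp add: abs_le_iff algebra_simps)
qed

lemma arith_step:
  fixes \<sigma> s T l n W K L x :: real
  assumes \<sigma>: "\<sigma> > 0" and s: "s > 0" and T: "T = \<sigma> / s" and n: "n > 0"
    and ln: "l / n = s^2 / 2" and W: "W \<le> \<sigma>^2 + K * \<sigma>^2 * L / n"
    and K: "K \<ge> 0" and L: "L \<ge> 0"
    and x: "x \<le> W / (2*T) + T * l / n"
  shows "x \<le> (1 + K * L / n) * \<sigma> * s"
proof -
  have "W / (2*T) = W * s / (2*\<sigma>)" using T \<sigma> s by simp
  also have "\<dots> \<le> (\<sigma>^2 + K * \<sigma>^2 * L / n) * s / (2*\<sigma>)"
    using W s \<sigma> by (intro divide_right_mono mult_right_mono) auto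
  also have "\<dots> = \<sigma> * s / 2 + K * L / n * \<sigma> * s / 2" using \<sigma> n by (simp add: field_simps power2_eq_square)
  finally have 1: "W / (2*T) \<le> \<sigma> * s / 2 + K * L / n * \<sigma> * s / 2" .
  have "T * l / n = T * (l / n)" by simp
  also have "\<dots> = \<sigma> / s * (s^2 / 2)" unfolding T ln[symmetric] by (rule refl)
  also have "\<dots> = \<sigma> * s / 2" using s by (simp add: power2_eq_square)
  finally have 2: "T * l / n = \<sigma> * s / 2" .
  have 3: "K * L / n * \<sigma> * s \<ge> 0" using K L n \<sigma> s by simp
  show ?thesis using x 1 2 3 by (simp add: algebra_simps)
qed

theorem lemma11:
  shows "\<forall>C1::real. C1 > 1 \<longrightarrow> (\<exists>C2::real. C2 > 1 \<and>
    (\<forall>(\<psi>::real \<Rightarrow> real) (\<delta>::real) (n::nat) (\<sigma>::real) (P::real measure) (\<mu>0::real).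
      (\<forall>x. - ln (1 - x + x^2 / 2) \<le> \<psi> x \<and> \<psi> x \<le> ln (1 + x + x^2 / 2))
      \<and> 0 < \<delta> \<and> \<delta> < 1
      \<and> real n > C2 * ln (1 / \<delta>)
      \<and> 0 \<le> \<sigma>
      \<and> prob_space P \<and> sets P = sets borel
      \<and> integrable P (\<lambda>x. x) \<and> integrable P (\<lambda>x. x^2)
      \<and> (\<integral>x. (x - (\<integral>y. y \<partial>P))^2 \<partial>P) \<le> \<sigma>^2
      \<and> \<bar>\<mu>0 - (\<integral>y. y \<partial>P)\<bar> \<le> C1 * \<sigma> * sqrt (ln (1 / \<delta>) / real n)
      \<longrightarrow>
      (let \<mu> = (\<integral>y. y \<partial>P);
           T = \<sigma> * sqrt (real n / (2 * ln (2 / \<delta>)));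
           M = PiM {..<n} (\<lambda>_. P);
           \<mu>hat = (\<lambda>\<omega>. \<mu>0 + T / real n * (\<Sum>i<n. \<psi> ((\<omega> i - \<mu>0) / T)))
       in \<exists>E \<in> sets M.
            E \<subseteq> {\<omega> \<in> space M. \<bar>\<mu>hat \<omega> - \<mu>\<bar>
                 \<le> (1 + C2 * ln (1 / \<delta>) / real n) * \<sigma> * sqrt (2 * ln (2 / \<delta>) / real n)}
            \<and> measure M E \<ge> 1 - \<delta>)))"
  proof (intro allI impI)
  fix C1 :: real assume C1: "C1 > 1"
  show "\<exists>C2::real. C2 > 1 \<and>
    (\<forall>(\<psi>::real \<Rightarrow> real) (\<delta>::real) (n::nat) (\<sigma>::real) (P::real measure) (\<mu>0::real).
      (\<forall>x. - ln (1 - x + x^2 / 2) \<le> \<psi> x \<and> \<psi> x \<le> ln (1 + x + x^2 / 2))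
      \<and> 0 < \<delta> \<and> \<delta> < 1
      \<and> real n > C2 * ln (1 / \<delta>)
      \<and> 0 \<le> \<sigma>
      \<and> prob_space P \<and> sets P = sets borel
      \<and> integrable P (\<lambda>x. x) \<and> integrable P (\<lambda>x. x^2)
      \<and> (\<integral>x. (x - (\<integral>y. y \<partial>P))^2 \<partial>P) \<le> \<sigma>^2
      \<and> \<bar>\<mu>0 - (\<integral>y. y \<partial>P)\<bar> \<le> C1 * \<sigma> * sqrt (ln (1 / \<delta>) / real n)
      \<longrightarrow>
      (let \<mu> = (\<integral>y. y \<partial>P);
           T = \<sigma> * sqrt (real n / (2 * ln (2 / \<delta>)));
           M = PiM {..<n} (\<lambda>_. P);
           \<mu>hat = (\<lambda>\<omega>. \<mu>0 + T / real n * (\<Sum>i<n. \<psi> ((\<omega> i - \<mu>0) / T)))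
       in \<exists>E \<in> sets M.
            E \<subseteq> {\<omega> \<in> space M. \<bar>\<mu>hat \<omega> - \<mu>\<bar>
                 \<le> (1 + C2 * ln (1 / \<delta>) / real n) * \<sigma> * sqrt (2 * ln (2 / \<delta>) / real n)}
            \<and> measure M E \<ge> 1 - \<delta>))"
  proof (rule exI[of _ "C1^2"], intro conjI allI impI)
    show "C1^2 > 1" using C1 by (simp add: less_1_mult power2_eq_square)
    fix \<psi> :: "real \<Rightarrow> real" and \<delta> :: real and n :: nat and \<sigma> :: real and P :: "real measure" and \<mu>0 :: real
    assume H: "(\<forall>x. - ln (1 - x + x^2 / 2) \<le> \<psi> x \<and> \<psi> x \<le> ln (1 + x + x^2 / 2))
      \<and> 0 < \<delta> \<and> \<delta> < 1
      \<and> real n > C1^2 * ln (1 / \<delta>)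
      \<and> 0 \<le> \<sigma>
      \<and> prob_space P \<and> sets P = sets borel
      \<and> integrable P (\<lambda>x. x) \<and> integrable P (\<lambda>x. x^2)
      \<and> (\<integral>x. (x - (\<integral>y. y \<partial>P))^2 \<partial>P) \<le> \<sigma>^2
      \<and> \<bar>\<mu>0 - (\<integral>y. y \<partial>P)\<bar> \<le> C1 * \<sigma> * sqrt (ln (1 / \<delta>) / real n)"
    then have psi: "\<And>x. - ln (1 - x + x^2 / 2) \<le> \<psi> x" "\<And>x. \<psi> x \<le> ln (1 + x + x^2 / 2)"
      and d0: "0 < \<delta>" and d1: "\<delta> < 1" and nbig: "real n > C1^2 * ln (1 / \<delta>)"
      and s0: "0 \<le> \<sigma>" and P: "prob_space P" and sP: "sets P = sets borel"
      and i1: "integrable P (\<lambda>x. x)" and i2: "integrable P (\<lambda>x. x^2)"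
      and Vle: "(\<integral>x. (x - (\<integral>y. y \<partial>P))^2 \<partial>P) \<le> \<sigma>^2"
      and m0: "\<bar>\<mu>0 - (\<integral>y. y \<partial>P)\<bar> \<le> C1 * \<sigma> * sqrt (ln (1 / \<delta>) / real n)"
      by blast+
    define \<mu> where "\<mu> = (\<integral>y. y \<partial>P)"
    define V where "V = (\<integral>x. (x - \<mu>)^2 \<partial>P)"
    define l where "l = ln (2 / \<delta>)"
    define L where "L = ln (1 / \<delta>)"
    define M where "M = PiM {..<n} (\<lambda>_. P)"
    define T where "T = \<sigma> * sqrt (real n / (2 * l))"
    define s where "s = sqrt (2 * l / real n)"
    have Lpos: "L > 0" unfolding L_def using d0 d1 by simp
    have lpos: "l > 0" unfolding l_def using d0 d1 by simp
    have C1sq: "C1^2 > 0" using C1 by simp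
    have "C1^2 * L > 0" using Lpos C1sq by simp
    then have npos: "real n > 0" using nbig unfolding L_def by linarith
    have PM: "prob_space M" unfolding M_def by (rule prob_space_PiM) (use P in auto)
    interpret PM: prob_space M by (rule PM)
    have main: "\<exists>E \<in> sets M.
            E \<subseteq> {\<omega> \<in> space M. \<bar>\<mu>0 + T / real n * (\<Sum>i<n. \<psi> ((\<omega> i - \<mu>0) / T)) - \<mu>\<bar>
                 \<le> (1 + C1^2 * L / real n) * \<sigma> * s}
            \<and> measure M E \<ge> 1 - \<delta>"
    proof (cases "\<sigma> = 0")
      case True
      have "\<mu>0 = \<mu>" using m0 True unfolding \<mu>_def by simp
      have T0: "T = 0" by (simp add: T_def True)
      show ?thesis
      proof (rule bexI[of _ "space M"])
        show "space M \<in> sets M" by simp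
        have "\<bar>\<mu>0 + T / real n * (\<Sum>i<n. \<psi> ((\<omega> i - \<mu>0) / T)) - \<mu>\<bar>
                 \<le> (1 + C1^2 * L / real n) * \<sigma> * s" for \<omega>
          using T0 True \<open>\<mu>0 = \<mu>\<close> by simp
        then show "space M \<subseteq> {\<omega> \<in> space M. \<bar>\<mu>0 + T / real n * (\<Sum>i<n. \<psi> ((\<omega> i - \<mu>0) / T)) - \<mu>\<bar>
                 \<le> (1 + C1^2 * L / real n) * \<sigma> * s} \<and> measure M (space M) \<ge> 1 - \<delta>"
          using d0 by (simp add: PM.prob_space)
      qed
    next
      case False
      have sp: "\<sigma> > 0" using s0 False by simp
      have sq: "sqrt (2 * l / real n) > 0" using lpos npos by (simp add: divide_pos_pos)
      have spos: "s > 0" unfolding s_def using sq .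
      have "sqrt (real n / (2 * l)) = sqrt (inverse (2 * l / real n))" by (simp add: inverse_divide)
      also have "\<dots> = inverse s" unfolding s_def by (rule real_sqrt_inverse)
      finally have Ts: "T = \<sigma> * inverse s" unfolding T_def by simp
      then have Ts: "T = \<sigma> / s" by (simp add: divide_inverse)
      have Tpos: "T > 0" unfolding Ts using sp spos by simp
      have s2: "s^2 = 2 * l / real n" unfolding s_def by (rule real_sqrt_pow2) (use lpos npos in simp)
      have ln: "l / real n = s^2 / 2" unfolding s2 by simp
      define d where "d = \<mu> - \<mu>0"
      define V where "V = (\<integral>x. (x - \<mu>)^2 \<partial>P)"
      define W where "W = V + d^2"
      obtain B1 where B1: "B1 \<in> sets M" "measure M B1 \<le> \<delta>/2"
        and B1b: "\<And>\<omega>. \<omega> \<in> space M - B1 \<Longrightarrow>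
          (\<Sum>i<n. ln (1 + (1/T)*(\<omega> i - \<mu>0) + ((1/T)*(\<omega> i - \<mu>0))^2/2))
           \<le> real n * ((1/T) * d + (1/T)^2 * W / 2) + l"
        using one_side[OF P sP i1 i2 d0, of n "1/T" \<mu>0]
        unfolding M_def[symmetric] \<mu>_def[symmetric] V_def[symmetric] l_def[symmetric] W_def d_def
        by blast
      obtain B2 where B2: "B2 \<in> sets M" "measure M B2 \<le> \<delta>/2"
        and B2b: "\<And>\<omega>. \<omega> \<in> space M - B2 \<Longrightarrow>
          (\<Sum>i<n. ln (1 + (-(1/T))*(\<omega> i - \<mu>0) + ((-(1/T))*(\<omega> i - \<mu>0))^2/2))
           \<le> real n * ((-(1/T)) * d + (-(1/T))^2 * W / 2) + l"
        using one_side[OF P sP i1 i2 d0, of n "-(1/T)" \<mu>0]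
        unfolding M_def[symmetric] \<mu>_def[symmetric] V_def[symmetric] l_def[symmetric] W_def d_def
        by blast
      have VW: "W \<le> \<sigma>^2 + C1^2 * \<sigma>^2 * L / real n"
      proof -
        have V: "V \<le> \<sigma>^2" using Vle unfolding V_def \<mu>_def .
        have "\<bar>d\<bar> \<le> C1 * \<sigma> * sqrt (L / real n)" using m0 unfolding d_def \<mu>_def L_def by simp
        then have "\<bar>d\<bar>^2 \<le> (C1 * \<sigma> * sqrt (L / real n))^2" by (intro power_mono) auto
        also have "\<dots> = C1^2 * \<sigma>^2 * L / real n" using Lpos npos by (simp add: power_mult_distrib)
        finally show ?thesis unfolding W_def using V by simp
      qed
      show ?thesis
      proof (rule bexI[of _ "space M - (B1 \<union> B2)"])
        show "space M - (B1 \<union> B2) \<in> sets M" using B1 B2 by auto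
        have c1: "measure M (space M - (B1 \<union> B2)) = 1 - measure M (B1 \<union> B2)"
          using B1 B2 by (intro PM.prob_compl) auto
        have c2: "measure M (B1 \<union> B2) \<le> measure M B1 + measure M B2"
          using B1 B2 by (intro measure_Un_le) auto
        have mE: "measure M (space M - (B1 \<union> B2)) \<ge> 1 - \<delta>" using B1 B2 c1 c2 by linarith
        have bnd: "\<bar>\<mu>0 + T / real n * (\<Sum>i<n. \<psi> ((\<omega> i - \<mu>0) / T)) - \<mu>\<bar>
                 \<le> (1 + C1^2 * L / real n) * \<sigma> * s" if w: "\<omega> \<in> space M - (B1 \<union> B2)" for \<omega>
        proof -
          define S where "S = (\<Sum>i<n. \<psi> ((\<omega> i - \<mu>0) / T))"
          have "S \<le> (\<Sum>i<n. ln (1 + (1/T)*(\<omega> i - \<mu>0) + ((1/T)*(\<omega> i - \<mu>0))^2/2))"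
            unfolding S_def by (intro sum_mono) (use psi(2) in simp)
          also have "\<dots> \<le> real n * ((1/T) * d + (1/T)^2 * W / 2) + l" using w by (intro B1b) auto
          finally have up: "S \<le> real n * ((1/T) * d + (1/T)^2 * W / 2) + l" .
          have "-S = (\<Sum>i<n. - \<psi> ((\<omega> i - \<mu>0) / T))" unfolding S_def by (simp add: sum_negf)
          also have "\<dots> \<le> (\<Sum>i<n. ln (1 + (-(1/T))*(\<omega> i - \<mu>0) + ((-(1/T))*(\<omega> i - \<mu>0))^2/2))"
          proof (intro sum_mono)
            fix i
            have "- \<psi> ((\<omega> i - \<mu>0) / T) \<le> ln (1 - (\<omega> i - \<mu>0) / T + ((\<omega> i - \<mu>0) / T)^2/2)"
              using psi(1)[of "(\<omega> i - \<mu>0) / T"] by simp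
            also have "1 - (\<omega> i - \<mu>0) / T + ((\<omega> i - \<mu>0) / T)^2/2
                = 1 + (-(1/T))*(\<omega> i - \<mu>0) + ((-(1/T))*(\<omega> i - \<mu>0))^2/2"
              by (simp add: power2_eq_square)
            finally show "- \<psi> ((\<omega> i - \<mu>0) / T) \<le> ln (1 + (-(1/T))*(\<omega> i - \<mu>0) + ((-(1/T))*(\<omega> i - \<mu>0))^2/2)" .
          qed
          also have "\<dots> \<le> real n * ((-(1/T)) * d + (-(1/T))^2 * W / 2) + l" using w by (intro B2b) auto
          finally have lo: "- S \<le> real n * ((-(1/T)) * d + (-(1/T))^2 * W / 2) + l" .
          have "\<bar>\<mu>0 + T / real n * S - \<mu>\<bar> \<le> W / (2*T) + T * l / real n"
            by (rule sum_step[OF Tpos npos d_def up lo])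
          then have "\<bar>\<mu>0 + T / real n * S - \<mu>\<bar> \<le> (1 + C1^2 * L / real n) * \<sigma> * s"
            by (intro arith_step[OF sp spos Ts npos ln VW]) (use Lpos in auto)
          then show ?thesis unfolding S_def .
        qed
        show "space M - (B1 \<union> B2) \<subseteq> {\<omega> \<in> space M. \<bar>\<mu>0 + T / real n * (\<Sum>i<n. \<psi> ((\<omega> i - \<mu>0) / T)) - \<mu>\<bar>
                 \<le> (1 + C1^2 * L / real n) * \<sigma> * s} \<and> measure M (space M - (B1 \<union> B2)) \<ge> 1 - \<delta>"
          using bnd mE by auto
      qed
    qed
    from main show "let \<mu> = (\<integral>y. y \<partial>P);
           T = \<sigma> * sqrt (real n / (2 * ln (2 / \<delta>)));
           M = PiM {..<n} (\<lambda>_. P);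
           \<mu>hat = (\<lambda>\<omega>. \<mu>0 + T / real n * (\<Sum>i<n. \<psi> ((\<omega> i - \<mu>0) / T)))
       in \<exists>E \<in> sets M.
            E \<subseteq> {\<omega> \<in> space M. \<bar>\<mu>hat \<omega> - \<mu>\<bar>
                 \<le> (1 + C1^2 * ln (1 / \<delta>) / real n) * \<sigma> * sqrt (2 * ln (2 / \<delta>) / real n)}
            \<and> measure M E \<ge> 1 - \<delta>"
      unfolding Let_def \<mu>_def l_def L_def M_def T_def s_def .
  qed
qed

end
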